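(* Let $0\neq h\in\mathbb{F}[x]$ and regard $A_h\subseteq A_1$ via $x\mapsto x$, $\hat y\mapsto yh$. Then the following are equivalent: (1) $h\in\mathbb{F}^*$; (2) $A_1$ is a Noetherian right $A_h$-module; (3) $A_1$ is a free right $A_h$-module. The same equivalence holds with "right" replaced by "left" in (2) and (3).
   Context: $\mathbb{F}$ is an arbitrary field. For $h\in\mathbb{F}[x]$, $A_h$ is the unital associative $\mathbb{F}$-algebra generated by $x,\hat y$ with defining relation $\hat yx-x\hat y=h$. $A_1$ is the Weyl algebra, generated by $x,y$ with $yx-xy=1$; for $h\neq 0$, $x\mapsto x,\ \hat y\mapsto yh$ embeds $A_h$ into $A_1$ as a subalgebra. *)

theory Defs
  imports "HOL-Computational_Algebra.Polynomial"
begin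

text \<open>Concrete model of the Weyl algebra A_1 over a field: an element
  sum_j p_j(x) y^j (normal ordering, x to the left of y) is represented as the
  polynomial in y with coefficients p_j in F[x], i.e. as an element of
  'a poly poly.  Addition is polynomial addition; multiplication uses the
  commutation rule  y^i q(x) = sum_k (i choose k) q^(k)(x) y^(i-k),
  which is equivalent to the defining relation yx - xy = 1.\<close>

definition weyl_mult :: "'a::field poly poly \<Rightarrow> 'a poly poly \<Rightarrow> 'a poly poly" where
  "weyl_mult P Q =
     (\<Sum>i\<le>degree P. \<Sum>j\<le>degree Q. \<Sum>k\<le>i.
        monom (of_nat (i choose k) * coeff P i * (pderiv ^^ k) (coeff Q j)) (i - k + j))"

definition weyl_x :: "'a::field poly poly" where
  "weyl_x = [:[:0, 1:]:]"

definition weyl_y :: "'a::field poly poly" where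
  "weyl_y = [:0, 1:]"

definition weyl_of_poly :: "'a::field poly \<Rightarrow> 'a poly poly" where
  "weyl_of_poly p = [:p:]"

text \<open>A_h, viewed as the subalgebra of A_1 generated by x and y h
  (image of the embedding x \<mapsto> x, \<hat>y \<mapsto> y h).\<close>
inductive_set weyl_sub :: "'a::field poly \<Rightarrow> 'a poly poly set" for h where
  one: "1 \<in> weyl_sub h"
| gen_x: "weyl_x \<in> weyl_sub h"
| gen_y: "weyl_mult weyl_y (weyl_of_poly h) \<in> weyl_sub h"
| add: "a \<in> weyl_sub h \<Longrightarrow> b \<in> weyl_sub h \<Longrightarrow> a + b \<in> weyl_sub h"
| smul: "a \<in> weyl_sub h \<Longrightarrow> smult [:c:] a \<in> weyl_sub h"
| mult: "a \<in> weyl_sub h \<Longrightarrow> b \<in> weyl_sub h \<Longrightarrow> weyl_mult a b \<in> weyl_sub h"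

definition right_submodule :: "'a::field poly \<Rightarrow> 'a poly poly set \<Rightarrow> bool" where
  "right_submodule h N \<longleftrightarrow> 0 \<in> N \<and> (\<forall>a\<in>N. \<forall>b\<in>N. a + b \<in> N)
     \<and> (\<forall>m\<in>N. \<forall>s\<in>weyl_sub h. weyl_mult m s \<in> N)"

definition left_submodule :: "'a::field poly \<Rightarrow> 'a poly poly set \<Rightarrow> bool" where
  "left_submodule h N \<longleftrightarrow> 0 \<in> N \<and> (\<forall>a\<in>N. \<forall>b\<in>N. a + b \<in> N)
     \<and> (\<forall>m\<in>N. \<forall>s\<in>weyl_sub h. weyl_mult s m \<in> N)"

definition noetherian_right :: "'a::field poly \<Rightarrow> bool" where
  "noetherian_right h \<longleftrightarrow>
     (\<forall>N :: nat \<Rightarrow> 'a poly poly set. (\<forall>n. right_submodule h (N n)) \<and> (\<forall>n. N n \<subseteq> N (Suc n))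
        \<longrightarrow> (\<exists>n0. \<forall>n\<ge>n0. N n = N n0))"

definition noetherian_left :: "'a::field poly \<Rightarrow> bool" where
  "noetherian_left h \<longleftrightarrow>
     (\<forall>N :: nat \<Rightarrow> 'a poly poly set. (\<forall>n. left_submodule h (N n)) \<and> (\<forall>n. N n \<subseteq> N (Suc n))
        \<longrightarrow> (\<exists>n0. \<forall>n\<ge>n0. N n = N n0))"

definition free_right :: "'a::field poly \<Rightarrow> bool" where
  "free_right h \<longleftrightarrow> (\<exists>B :: 'a poly poly set.
     (\<forall>m. \<exists>F c. finite F \<and> F \<subseteq> B \<and> (\<forall>b\<in>F. c b \<in> weyl_sub h)
              \<and> m = (\<Sum>b\<in>F. weyl_mult b (c b))) \<and>
     (\<forall>F c. finite F \<and> F \<subseteq> B \<and> (\<forall>b\<in>F. c b \<in> weyl_sub h)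
              \<and> (\<Sum>b\<in>F. weyl_mult b (c b)) = 0 \<longrightarrow> (\<forall>b\<in>F. c b = 0)))"

definition free_left :: "'a::field poly \<Rightarrow> bool" where
  "free_left h \<longleftrightarrow> (\<exists>B :: 'a poly poly set.
     (\<forall>m. \<exists>F c. finite F \<and> F \<subseteq> B \<and> (\<forall>b\<in>F. c b \<in> weyl_sub h)
              \<and> m = (\<Sum>b\<in>F. weyl_mult (c b) b)) \<and>
     (\<forall>F c. finite F \<and> F \<subseteq> B \<and> (\<forall>b\<in>F. c b \<in> weyl_sub h)
              \<and> (\<Sum>b\<in>F. weyl_mult (c b) b) = 0 \<longrightarrow> (\<forall>b\<in>F. c b = 0)))"

end

theory Submission
  imports Defs "HOL-Library.Extended_Nat"
begin


definition Dop :: "'a::field poly poly \<Rightarrow> 'a poly poly" where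
  "Dop g = map_poly pderiv g + pCons 0 g"

lemma coeff_Dop: "coeff (Dop g) n = pderiv (coeff g n) + (case n of 0 \<Rightarrow> 0 | Suc m \<Rightarrow> coeff g m)"
  by (simp add: Dop_def coeff_map_poly coeff_pCons split: nat.split)

definition cf :: "nat \<Rightarrow> 'a::field poly \<Rightarrow> nat \<Rightarrow> nat \<Rightarrow> 'a poly" where
  "cf i q j n = (if j \<le> n \<and> n \<le> i + j then of_nat (i choose (i+j-n)) * (pderiv^^(i+j-n)) q else 0)"

lemma pderiv_of_nat_mult: "pderiv (of_nat c * p) = of_nat c * pderiv (p::'a::field poly)"
  by (simp add: pderiv_mult pderiv_of_nat)

lemma coeff_Dop_pow_monom: "coeff ((Dop^^i) (monom q j)) n = cf i q j n"
proof (induction i arbitrary: n)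
  case 0
  then show ?case by (auto simp: cf_def coeff_monom)
next
  case (Suc i)
  have "coeff ((Dop^^Suc i) (monom q j)) n = pderiv (cf i q j n) + (case n of 0 \<Rightarrow> 0 | Suc m \<Rightarrow> cf i q j m)"
    by (simp add: coeff_Dop Suc split: nat.split)
  also have "\<dots> = cf (Suc i) q j n"
  proof (cases n)
    case 0
    then show ?thesis by (cases j) (auto simp: cf_def pderiv_of_nat_mult)
  next
    case (Suc m)
    consider "n < j" | "n = j" | "j < n \<and> n \<le> i + j" | "n = i + j + 1" | "n > i + j + 1" by linarith
    then show ?thesis
    proof cases
      case 1 then show ?thesis using Suc by (auto simp: cf_def)
    next
      case 2 then show ?thesis using Suc by (auto simp: cf_def pderiv_of_nat_mult)
    next
      case 3
      define k where "k = i + j - n"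
      have k1: "i + j - m = Suc k" "Suc i + j - n = Suc k" using 3 Suc k_def by auto
      have "pderiv (cf i q j n) = of_nat (i choose k) * (pderiv^^(Suc k)) q"
        using 3 by (simp add: cf_def k_def pderiv_of_nat_mult)
      moreover have "cf i q j m = of_nat (i choose Suc k) * (pderiv^^(Suc k)) q"
        using 3 Suc k1 by (simp add: cf_def)
      moreover have "cf (Suc i) q j n = of_nat (Suc i choose Suc k) * (pderiv^^(Suc k)) q"
        using 3 k1 by (simp add: cf_def)
      ultimately show ?thesis using Suc by (simp add: algebra_simps)
    next
      case 4 then show ?thesis using Suc by (auto simp: cf_def)
    next
      case 5 then show ?thesis using Suc by (auto simp: cf_def)
    qed
  qed
  finally show ?case .
qed

lemma Dop_add: "Dop (a + b) = Dop a + Dop b"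
  by (rule poly_eqI) (simp add: coeff_Dop pderiv_add split: nat.split)

lemma Dop_0[simp]: "Dop 0 = 0"
  by (rule poly_eqI) (simp add: coeff_Dop split: nat.split)

lemma Dop_sum: "Dop (\<Sum>x\<in>A. f x) = (\<Sum>x\<in>A. Dop (f x))"
  by (induction A rule: infinite_finite_induct) (auto simp: Dop_add)

lemma Dop_pow_sum: "(Dop^^i) (\<Sum>x\<in>A. f x) = (\<Sum>x\<in>A. (Dop^^i) (f x))"
  by (induction i) (auto simp: Dop_sum)

lemma Dop_pow_add: "(Dop^^i) (a + b) = (Dop^^i) a + (Dop^^i) b"
  by (induction i) (auto simp: Dop_add)

lemma Dop_pow_0[simp]: "(Dop^^i) 0 = 0"
  by (induction i) auto

lemma Dop_smult: "Dop (smult p v) = smult (pderiv p) v + smult p (Dop v)"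
  by (rule poly_eqI) (simp add: coeff_Dop pderiv_mult algebra_simps split: nat.split)

lemma coeff_Dop_pow: "coeff ((Dop^^i) g) n = (\<Sum>j\<le>degree g. cf i (coeff g j) j n)"
proof -
  have "coeff ((Dop^^i) g) n = coeff ((Dop^^i) (\<Sum>j\<le>degree g. monom (coeff g j) j)) n"
    by (simp add: poly_as_sum_of_monoms)
  also have "\<dots> = (\<Sum>j\<le>degree g. cf i (coeff g j) j n)"
    by (simp add: Dop_pow_sum coeff_sum coeff_Dop_pow_monom)
  finally show ?thesis .
qed

definition Lop :: "'a::field poly poly \<Rightarrow> 'a poly poly \<Rightarrow> 'a poly poly" where
  "Lop f g = (\<Sum>i\<le>degree f. smult (coeff f i) ((Dop^^i) g))"

lemma inner_sum_cf:
  "(\<Sum>k\<le>i. if i + j - k = n then c k else 0) = (if j \<le> n \<and> n \<le> i + j then c (i + j - (n::nat)) else 0)"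
proof -
  have e: "\<And>k. k \<le> i \<Longrightarrow> (i + j - k = n) = (k = i + j - n \<and> j \<le> n \<and> n \<le> i + j)" by presburger
  have "(\<Sum>k\<le>i. if i + j - k = n then c k else 0) = (\<Sum>k\<le>i. if k = i + j - n \<and> j \<le> n \<and> n \<le> i + j then c k else 0)"
    by (rule sum.cong) (auto simp: e)
  also have "\<dots> = (if j \<le> n \<and> n \<le> i + j then c (i + j - n) else 0)"
    by (cases "j \<le> n \<and> n \<le> i + j") (auto simp: sum.delta)
  finally show ?thesis .
qed

lemma weyl_mult_Lop: "weyl_mult f g = Lop f g"
proof (rule poly_eqI)
  fix n
  have "coeff (weyl_mult f g) n = (\<Sum>i\<le>degree f. \<Sum>j\<le>degree g. \<Sum>k\<le>i.
     if i + j - k = n then of_nat (i choose k) * coeff f i * (pderiv ^^ k) (coeff g j) else 0)"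
    unfolding weyl_mult_def by (simp add: coeff_sum coeff_monom eq_commute)
  also have "\<dots> = (\<Sum>i\<le>degree f. \<Sum>j\<le>degree g. coeff f i * cf i (coeff g j) j n)"
    by (intro sum.cong refl, subst inner_sum_cf) (simp add: cf_def algebra_simps)
  also have "\<dots> = coeff (Lop f g) n"
    by (simp add: Lop_def coeff_sum coeff_Dop_pow sum_distrib_left)
  finally show "coeff (weyl_mult f g) n = coeff (Lop f g) n" .
qed

lemma Lop_bound: "degree f \<le> N \<Longrightarrow> Lop f g = (\<Sum>i\<le>N. smult (coeff f i) ((Dop^^i) g))"
  unfolding Lop_def
  by (rule sum.mono_neutral_left) (auto simp: coeff_eq_0)

lemma Lop_add_left: "Lop (f1 + f2) g = Lop f1 g + Lop f2 g"
proof -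
  define N where "N = max (degree f1) (degree f2)"
  have "degree (f1 + f2) \<le> N" "degree f1 \<le> N" "degree f2 \<le> N"
    using degree_add_le_max[of f1 f2] N_def by auto
  then show ?thesis by (simp add: Lop_bound[of _ N] smult_add_left sum.distrib)
qed

lemma Lop_add_right: "Lop f (g1 + g2) = Lop f g1 + Lop f g2"
  by (simp add: Lop_def Dop_pow_add smult_add_right sum.distrib)

lemma Lop_0_left[simp]: "Lop 0 g = 0" by (simp add: Lop_def)
lemma Lop_0_right[simp]: "Lop f 0 = 0" by (simp add: Lop_def)

lemma Lop_sum_left: "Lop (\<Sum>x\<in>A. f x) g = (\<Sum>x\<in>A. Lop (f x) g)"
  by (induction A rule: infinite_finite_induct) (auto simp: Lop_add_left)

lemma Lop_sum_right: "Lop f (\<Sum>x\<in>A. g x) = (\<Sum>x\<in>A. Lop f (g x))"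
  by (induction A rule: infinite_finite_induct) (auto simp: Lop_add_right)

lemma smult_sum_right: "smult p (\<Sum>x\<in>A. f x) = (\<Sum>x\<in>A. smult p (f x))"
  by (induction A rule: infinite_finite_induct) (auto simp: smult_add_right)

lemma Lop_smult_left: "Lop (smult p f) g = smult p (Lop f g)"
  by (simp add: Lop_bound[of "smult p f" "degree f"] degree_smult_le Lop_def smult_sum_right)

lemma Lop_minus_right: "Lop f (- g) = - Lop f g"
  using Lop_add_right[of f "-g" g] by (simp add: eq_neg_iff_add_eq_0)

lemma Lop_minus_left: "Lop (- f) g = - Lop f g"
  using Lop_add_left[of "-f" f g] by (simp add: eq_neg_iff_add_eq_0)

lemma Lop_diff_right: "Lop f (g1 - g2) = Lop f g1 - Lop f g2"
  using Lop_add_right[of f g1 "-g2"] by (simp add: Lop_minus_right)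

lemma Lop_diff_left: "Lop (f1 - f2) g = Lop f1 g - Lop f2 g"
  using Lop_add_left[of f1 "-f2" g] by (simp add: Lop_minus_left)

lemma degree_Dop_le: "degree (Dop g) \<le> degree g + 1"
  by (rule degree_le) (auto simp: coeff_Dop coeff_eq_0 split: nat.split)

lemma Lop_Dop_left: "Lop (Dop g) u = Dop (Lop g u)"
proof -
  define N where "N = degree g"
  have "Lop (Dop g) u = (\<Sum>i\<le>Suc N. smult (coeff (Dop g) i) ((Dop^^i) u))"
    using degree_Dop_le N_def by (intro Lop_bound) simp
  also have "\<dots> = (\<Sum>i\<le>Suc N. smult (pderiv (coeff g i)) ((Dop^^i) u))
      + (\<Sum>i\<le>Suc N. smult (case i of 0 \<Rightarrow> 0 | Suc m \<Rightarrow> coeff g m) ((Dop^^i) u))"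
    by (simp add: coeff_Dop smult_add_left sum.distrib)
  also have "(\<Sum>i\<le>Suc N. smult (pderiv (coeff g i)) ((Dop^^i) u))
      = (\<Sum>i\<le>N. smult (pderiv (coeff g i)) ((Dop^^i) u))"
    by (simp add: N_def coeff_eq_0)
  also have "(\<Sum>i\<le>Suc N. smult (case i of 0 \<Rightarrow> 0 | Suc m \<Rightarrow> coeff g m) ((Dop^^i) u))
      = (\<Sum>i\<le>N. smult (coeff g i) ((Dop^^(Suc i)) u))"
    by (subst sum.atMost_Suc_shift) simp
  also have "(\<Sum>i\<le>N. smult (pderiv (coeff g i)) ((Dop^^i) u)) + (\<Sum>i\<le>N. smult (coeff g i) ((Dop^^(Suc i)) u))
     = Dop (Lop g u)"
    by (simp add: Lop_def N_def Dop_sum Dop_smult sum.distrib)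
  finally show ?thesis .
qed

lemma Lop_Dop_pow_left: "Lop ((Dop^^i) g) u = (Dop^^i) (Lop g u)"
  by (induction i) (auto simp: Lop_Dop_left)

lemma Lop_assoc: "Lop (Lop f g) u = Lop f (Lop g u)"
  by (simp add: Lop_def[of f] Lop_sum_left Lop_smult_left Lop_Dop_pow_left)

lemma Lop_const_left: "Lop [:p:] g = smult p g"
  by (simp add: Lop_def)

lemma Lop_one_left[simp]: "Lop 1 g = g"
  by (simp add: Lop_def)

lemma Dop_monom1: "Dop (monom 1 i) = monom 1 (Suc i)"
  by (rule poly_eqI) (auto simp: coeff_Dop coeff_monom split: nat.split)

lemma Dop_pow_one: "(Dop^^i) 1 = monom 1 i"
  by (induction i) (auto simp: Dop_monom1)

lemma Lop_one_right[simp]: "Lop f 1 = f"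
  by (simp add: Lop_def Dop_pow_one smult_monom poly_as_sum_of_monoms)

lemma coeff_Dop_pow_high: "n > degree g + i \<Longrightarrow> coeff ((Dop^^i) g) n = 0"
proof (induction i arbitrary: n)
  case 0 then show ?case by (simp add: coeff_eq_0)
next
  case (Suc i)
  then show ?case by (auto simp: coeff_Dop split: nat.split)
qed

lemma degree_Dop_pow: "degree ((Dop^^i) g) \<le> degree g + i"
  by (rule degree_le) (simp add: coeff_Dop_pow_high)

lemma coeff_Dop_pow_top: "coeff ((Dop^^i) g) (degree g + i) = lead_coeff g"
proof (induction i)
  case 0 then show ?case by simp
next
  case (Suc i)
  then show ?case by (simp add: coeff_Dop coeff_Dop_pow_high)
qed

lemma degree_Lop_le: "degree (Lop f g) \<le> degree f + degree g"
  unfolding Lop_def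
  by (rule degree_sum_le) (auto intro: order.trans[OF degree_smult_le] order.trans[OF degree_Dop_pow])

lemma coeff_Lop_top: "coeff (Lop f g) (degree f + degree g) = lead_coeff f * lead_coeff g"
proof -
  have "coeff (Lop f g) (degree f + degree g) = (\<Sum>i\<le>degree f. coeff f i * coeff ((Dop^^i) g) (degree f + degree g))"
    by (simp add: Lop_def coeff_sum)
  also have "\<dots> = (\<Sum>i\<le>degree f. if i = degree f then lead_coeff f * lead_coeff g else 0)"
  proof (rule sum.cong)
    fix i assume "i \<in> {..degree f}"
    then show "coeff f i * coeff ((Dop^^i) g) (degree f + degree g) = (if i = degree f then lead_coeff f * lead_coeff g else 0)"
      using coeff_Dop_pow_top[of i g] coeff_Dop_pow_high[of g i "degree f + degree g"]
      by (auto simp: add.commute)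
  qed simp
  also have "\<dots> = lead_coeff f * lead_coeff g" by simp
  finally show ?thesis .
qed

lemma Lop_eq_0: "Lop f g = 0 \<longleftrightarrow> f = 0 \<or> g = 0"
proof
  assume "Lop f g = 0"
  then have "lead_coeff f * lead_coeff g = 0" using coeff_Lop_top[of f g] by simp
  then show "f = 0 \<or> g = 0" by simp
qed auto

lemma degree_Lop: "f \<noteq> 0 \<Longrightarrow> g \<noteq> 0 \<Longrightarrow> degree (Lop f g) = degree f + degree g"
  using degree_Lop_le[of f g] coeff_Lop_top[of f g]
  by (metis le_antisym le_degree leading_coeff_0_iff mult_eq_0_iff)

definition dshift :: "'a::field poly \<Rightarrow> nat \<Rightarrow> 'a poly poly \<Rightarrow> bool" where
  "dshift h a f \<longleftrightarrow> (\<forall>j. h^(j - a) dvd coeff f j)"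

lemma pderiv_pow_dvd1: "h^m dvd q \<Longrightarrow> h^(m - 1) dvd pderiv (q::'a::field poly)"
proof -
  assume "h^m dvd q"
  then obtain r where q: "q = h^m * r" by (auto elim: dvdE)
  have e: "pderiv q = pderiv (h^m) * r + h^m * pderiv r" by (simp add: q pderiv_mult)
  have d1: "h^(m-1) dvd pderiv (h^m)" unfolding pderiv_power by (intro dvd_smult) simp
  have d2: "h^(m-1) dvd h^m" by (simp add: le_imp_power_dvd)
  show ?thesis unfolding e by (intro dvd_add dvd_mult2 d1 dvd_trans[OF d2]) simp
qed

lemma pderiv_pow_dvd: "h^a dvd q \<Longrightarrow> h^(a - k) dvd (pderiv^^k) (q::'a::field poly)"
proof (induction k)
  case 0 then show ?case by simp
next
  case (Suc k)
  then have "h^(a - k - 1) dvd pderiv ((pderiv^^k) q)" by (intro pderiv_pow_dvd1) auto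
  then show ?case by simp
qed

lemma coeff_weyl_mult: "coeff (weyl_mult f g) n = (\<Sum>i\<le>degree f. \<Sum>j\<le>degree g. \<Sum>k\<le>i.
     if i + j - k = n then of_nat (i choose k) * coeff f i * (pderiv ^^ k) (coeff g j) else 0)"
  unfolding weyl_mult_def by (simp add: coeff_sum coeff_monom eq_commute)

lemma dshift_mult:
  assumes "dshift h a f" "dshift h b g"
  shows "dshift h (a + b) (weyl_mult f g)"
  unfolding dshift_def
proof
  fix n
  show "h ^ (n - (a + b)) dvd coeff (weyl_mult f g) n"
    unfolding coeff_weyl_mult
  proof (intro dvd_sum)
    fix i j k assume ijk: "i \<in> {..degree f}" "j \<in> {..degree g}" "k \<in> {..i}"
    show "h ^ (n - (a + b)) dvd (if i + j - k = n then of_nat (i choose k) * coeff f i * (pderiv ^^ k) (coeff g j) else 0)"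
    proof (cases "i + j - k = n")
      case True
      have d1: "h^(i - a) dvd coeff f i" using assms(1) by (simp add: dshift_def)
      have d2: "h^((j - b) - k) dvd (pderiv ^^ k) (coeff g j)"
        using assms(2) by (intro pderiv_pow_dvd) (simp add: dshift_def)
      have "h^((i - a) + ((j - b) - k)) dvd coeff f i * (pderiv ^^ k) (coeff g j)"
        using mult_dvd_mono[OF d1 d2] by (simp add: power_add)
      moreover have "n - (a + b) \<le> (i - a) + ((j - b) - k)" using True ijk by auto
      ultimately have "h ^ (n - (a + b)) dvd coeff f i * (pderiv ^^ k) (coeff g j)"
        using le_imp_power_dvd dvd_trans by blast
      then show ?thesis using True by (simp add: mult.assoc)
    qed simp
  qed
qed

lemma Y_eq: "weyl_mult weyl_y (weyl_of_poly h) = [:pderiv h, h:]"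
proof -
  have "weyl_mult weyl_y (weyl_of_poly h) = Dop [:h:]"
    by (simp add: weyl_mult_Lop Lop_def weyl_y_def weyl_of_poly_def)
  also have "\<dots> = [:pderiv h, h:]"
    by (rule poly_eqI) (auto simp: coeff_Dop coeff_pCons split: nat.split)
  finally show ?thesis .
qed

lemma weyl_sub_dshift: "f \<in> weyl_sub h \<Longrightarrow> dshift h 0 f"
proof (induction rule: weyl_sub.induct)
  case one
  then show ?case by (auto simp: dshift_def coeff_1)
next
  case gen_x
  then show ?case by (auto simp: dshift_def weyl_x_def coeff_pCons split: nat.split)
next
  case gen_y
  then show ?case by (auto simp: dshift_def Y_eq coeff_pCons split: nat.split)
next
  case (add a b)
  then show ?case by (auto simp: dshift_def)
next
  case (smul a c)
  then show ?case by (auto simp: dshift_def dvd_smult)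
next
  case (mult a b)
  then show ?case using dshift_mult[of h 0 a 0 b] by simp
qed

lemma ws_zero: "0 \<in> weyl_sub h"
  using weyl_sub.smul[OF weyl_sub.one, where c=0] by simp

lemma ws_neg: "a \<in> weyl_sub h \<Longrightarrow> - a \<in> weyl_sub h"
proof -
  assume "a \<in> weyl_sub h"
  then have "smult [:-1:] a \<in> weyl_sub h" by (rule weyl_sub.smul)
  moreover have "smult [:-1:] a = -a" by (rule poly_eqI) simp
  ultimately show ?thesis by simp
qed

lemma ws_diff: "a \<in> weyl_sub h \<Longrightarrow> b \<in> weyl_sub h \<Longrightarrow> a - b \<in> weyl_sub h"
  using weyl_sub.add[OF _ ws_neg] by fastforce

lemma ws_const: "[:q:] \<in> weyl_sub h"
proof (induction q)
  case 0
  then show ?case using ws_zero by simp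
next
  case (pCons a q)
  have "weyl_mult weyl_x [:q:] = [:pCons 0 q:]"
    by (simp add: weyl_mult_Lop weyl_x_def Lop_const_left)
  then have "[:pCons 0 q:] \<in> weyl_sub h" using weyl_sub.mult[OF weyl_sub.gen_x pCons.IH] by simp
  moreover have "[:[:a:]:] \<in> weyl_sub h" using weyl_sub.smul[OF weyl_sub.one, where c=a]
    by (simp add: one_pCons)
  ultimately have "[:[:a:]:] + [:pCons 0 q:] \<in> weyl_sub h" by (blast intro: weyl_sub.add)
  moreover have "[:[:a:]:] + [:pCons 0 q:] = [:pCons a q:]" by simp
  ultimately show ?case by simp
qed

fun Yp :: "'a::field poly \<Rightarrow> nat \<Rightarrow> 'a poly poly" where
  "Yp h 0 = 1"
| "Yp h (Suc n) = weyl_mult (weyl_mult weyl_y (weyl_of_poly h)) (Yp h n)"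

lemma Yp_in: "Yp h n \<in> weyl_sub h"
  by (induction n) (auto intro: weyl_sub.intros)

lemma Yp_deg: "h \<noteq> 0 \<Longrightarrow> Yp h n \<noteq> 0 \<and> degree (Yp h n) = n \<and> lead_coeff (Yp h n) = h^n"
proof (induction n)
  case 0 then show ?case by simp
next
  case (Suc n)
  let ?Y = "[:pderiv h, h:]"
  have Y: "?Y \<noteq> 0" "degree ?Y = 1" "lead_coeff ?Y = h" using Suc.prems by auto
  have "Yp h (Suc n) = Lop ?Y (Yp h n)" by (subst Yp.simps, subst Y_eq, rule weyl_mult_Lop)
  then show ?case using Suc Y degree_Lop[of ?Y "Yp h n"] coeff_Lop_top[of ?Y "Yp h n"]
    by (auto simp: Lop_eq_0)
qed

lemma dshift_in_ws:
  assumes h: "h \<noteq> 0" and "dshift h 0 f"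
  shows "f \<in> weyl_sub h"
  using assms(2)
proof (induction "degree f" arbitrary: f rule: less_induct)
  case less
  define n where "n = degree f"
  have "h^n dvd lead_coeff f" using less.prems by (simp add: dshift_def n_def)
  then obtain r where r: "lead_coeff f = h^n * r" by (auto elim: dvdE)
  define g where "g = weyl_mult [:r:] (Yp h n)"
  have g_in: "g \<in> weyl_sub h" unfolding g_def by (intro weyl_sub.mult ws_const Yp_in)
  have g_eq: "g = smult r (Yp h n)" by (simp add: g_def weyl_mult_Lop Lop_const_left)
  have Y3: "Yp h n \<noteq> 0 \<and> degree (Yp h n) = n \<and> lead_coeff (Yp h n) = h^n" by (rule Yp_deg[OF h])
  have Yn: "degree (Yp h n) = n" "coeff (Yp h n) n = h^n" using Y3 by metis+
  have dg: "degree (f - g) \<le> n"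
    using degree_diff_le[of f n g] g_eq Yn degree_smult_le[of r "Yp h n"] n_def by auto
  have cg: "coeff (f - g) n = 0" using r g_eq Yn n_def by (simp add: mult.commute)
  have fg_in: "f - g \<in> weyl_sub h"
  proof (cases "f - g = 0")
    case True then show ?thesis using ws_zero by simp
  next
    case False
    then have "degree (f - g) < n" using dg cg
      by (metis le_neq_implies_less leading_coeff_0_iff)
    moreover have "dshift h 0 (f - g)"
      using less.prems weyl_sub_dshift[OF g_in] by (auto simp: dshift_def dvd_diff)
    ultimately show ?thesis using less.hyps n_def by blast
  qed
  have "f = (f - g) + g" by simp
  then show ?case using weyl_sub.add[OF fg_in g_in] by simp
qed

lemma weyl_sub_char: "h \<noteq> 0 \<Longrightarrow> weyl_sub h = {f. dshift h 0 f}"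
  using weyl_sub_dshift dshift_in_ws by blast



lemma dec_stab:
  fixes g :: "nat \<Rightarrow> 'w::wellorder"
  assumes "\<And>m. g (Suc m) \<le> g m"
  shows "\<exists>m0. \<forall>m\<ge>m0. g m = g m0"
proof -
  define v where "v = (LEAST v. \<exists>m. g m = v)"
  have "\<exists>m. g m = v" unfolding v_def by (rule LeastI[of _ "g 0"]) (rule exI[of _ 0], rule refl)
  then obtain m0 where m0: "g m0 = v" by blast
  have "\<forall>m\<ge>m0. g m = g m0"
  proof (intro allI impI)
    fix m assume "m0 \<le> m"
    then have "g m \<le> g m0" by (rule lift_Suc_antimono_le[of g, OF assms])
    moreover have "v \<le> g m" unfolding v_def by (rule Least_le) (rule exI[of _ m], rule refl)
    ultimately show "g m = g m0" using m0 by simp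
  qed
  then show ?thesis by blast
qed

lemma double_stab:
  fixes d :: "nat \<Rightarrow> nat \<Rightarrow> 'w::wellorder"
  assumes m: "\<And>m n. d (Suc m) n \<le> d m n" and n: "\<And>m n. d m (Suc n) \<le> d m n"
  shows "\<exists>m0. \<forall>m\<ge>m0. \<forall>n. d m n = d m0 n"
proof -
  define v where "v = (LEAST v. \<exists>m n. d m n = v)"
  have "\<exists>m n. d m n = v" unfolding v_def by (rule LeastI[of _ "d 0 0"]) (rule exI[of _ 0], rule exI[of _ 0], rule refl)
  then obtain m1 n1 where mn1: "d m1 n1 = v" by blast
  have vle: "v \<le> d m n" for m n unfolding v_def by (rule Least_le) (rule exI[of _ m], rule exI[of _ n], rule refl)
  have anti: "d m' n' \<le> d m n" if "m \<le> m'" "n \<le> n'" for m n m' n'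
  proof -
    have "d m' n' \<le> d m' n" by (rule lift_Suc_antimono_le[of "d m'", OF n that(2)])
    also have "\<dots> \<le> d m n" by (rule lift_Suc_antimono_le[of "\<lambda>m. d m n", OF m that(1)])
    finally show ?thesis .
  qed
  have "\<forall>n. \<exists>s. \<forall>m\<ge>s. d m n = d s n"
  proof
    fix n show "\<exists>s. \<forall>m\<ge>s. d m n = d s n" using dec_stab[of "\<lambda>m. d m n", OF m] by simp
  qed
  from choice[OF this] obtain s where s0: "\<forall>n. \<forall>m\<ge>s n. d m n = d (s n) n" by blast
  have s: "\<And>n m. m \<ge> s n \<Longrightarrow> d m n = d (s n) n" using s0 by blast
  define m0 where "m0 = m1 + (\<Sum>n<n1. s n)"
  have "\<forall>m\<ge>m0. \<forall>n. d m n = d m0 n"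
  proof (intro allI impI)
    fix m n assume mm: "m0 \<le> m"
    show "d m n = d m0 n"
    proof (cases "n < n1")
      case True
      then have "s n \<le> (\<Sum>n<n1. s n)" by (intro member_le_sum) auto
      then have "s n \<le> m0" "s n \<le> m" using mm m0_def by auto
      then show ?thesis using s[of n m] s[of n m0] by simp
    next
      case False
      have "m1 \<le> m0" by (simp add: m0_def)
      have a1: "d m n \<le> d m1 n1" using \<open>m1 \<le> m0\<close> mm False by (intro anti) auto
      have a2: "d m0 n \<le> d m1 n1" using \<open>m1 \<le> m0\<close> mm False by (intro anti) auto
      have "d m n = v" using a1 vle[of m n] mn1 by simp
      moreover have "d m0 n = v" using a2 vle[of m0 n] mn1 by simp
      ultimately show ?thesis by simp
    qed
  qed
  then show ?thesis by blast
qed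

lemma acc_generic:
  fixes N :: "nat \<Rightarrow> 'a::field poly poly set" and act :: "'a poly poly \<Rightarrow> 'a poly poly \<Rightarrow> 'a poly poly"
  assumes z: "\<And>n. 0 \<in> N n"
    and ad: "\<And>n a b. a \<in> N n \<Longrightarrow> b \<in> N n \<Longrightarrow> a + b \<in> N n"
    and ng: "\<And>n a. a \<in> N n \<Longrightarrow> - a \<in> N n"
    and aq: "\<And>n f q. f \<in> N n \<Longrightarrow> act [:q:] f \<in> N n"
    and ay: "\<And>n f. f \<in> N n \<Longrightarrow> act weyl_y f \<in> N n"
    and mono: "\<And>n. N n \<subseteq> N (Suc n)"
    and lq: "\<And>f q. degree (act [:q:] f) \<le> degree f \<and> coeff (act [:q:] f) (degree f) = lead_coeff f * q"
    and ly: "\<And>f. degree (act weyl_y f) \<le> Suc (degree f) \<and> coeff (act weyl_y f) (Suc (degree f)) = lead_coeff f"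
  shows "\<exists>n0. \<forall>n\<ge>n0. N n = N n0"
proof -
  define P where "P m n e \<longleftrightarrow> (\<exists>f\<in>N m. f \<noteq> 0 \<and> degree f = n \<and> degree (lead_coeff f) = e)" for m n e
  define d where "d m n = (if \<exists>e. P m n e then enat (LEAST e. P m n e) else \<infinity>)" for m n
  have Pm: "P (Suc m) n e" if "P m n e" for m n e
    using that mono unfolding P_def by blast
  have Pn: "P m (Suc n) e" if hP: "P m n e" for m n e
  proof -
    obtain f where f: "f \<in> N m" "f \<noteq> 0" "degree f = n" "degree (lead_coeff f) = e"
      using hP unfolding P_def by blast
    let ?g = "act weyl_y f"
    have c: "coeff ?g (Suc n) = lead_coeff f" using ly[of f] f by simp
    have "coeff ?g (Suc n) \<noteq> 0" unfolding c using f(2) by simp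
    then have "degree ?g = Suc n" using ly[of f] f by (metis le_antisym le_degree)
    then show ?thesis unfolding P_def using ay[OF f(1)] c f
      by (intro bexI[of _ ?g]) auto
  qed
  have dmono: "d m' n' \<le> d m n" if "\<And>e. P m n e \<Longrightarrow> P m' n' e" for m n m' n'
  proof (cases "\<exists>e. P m n e")
    case True
    then have p: "P m n (LEAST e. P m n e)" by (metis LeastI)
    then have "P m' n' (LEAST e. P m n e)" by (rule that)
    then have "(LEAST e. P m' n' e) \<le> (LEAST e. P m n e)" by (rule Least_le)
    moreover have "\<exists>e. P m' n' e" using p that by blast
    ultimately show ?thesis using True by (simp add: d_def)
  qed (simp add: d_def)
  have dle: "d m n \<le> enat e" if "P m n e" for m n e
  proof -
    have "\<exists>e. P m n e" using that by blast
    moreover have "(LEAST e. P m n e) \<le> e" using that by (rule Least_le)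
    ultimately show ?thesis by (simp add: d_def)
  qed
  have dat: "P m n e" if "d m n = enat e" for m n e
  proof -
    have ex: "\<exists>e. P m n e"
    proof (rule ccontr)
      assume "\<not> (\<exists>e. P m n e)"
      then have "d m n = \<infinity>" by (simp add: d_def)
      with that show False by simp
    qed
    then have "e = (LEAST e. P m n e)" using that by (simp add: d_def)
    then show ?thesis using ex by (metis LeastI)
  qed
  have "\<exists>m0. \<forall>m\<ge>m0. \<forall>n. d m n = d m0 n"
  proof (rule double_stab)
    show "d (Suc m) n \<le> d m n" for m n by (rule dmono) (rule Pm)
    show "d m (Suc n) \<le> d m n" for m n by (rule dmono) (rule Pn)
  qed
  then obtain m0 where m0: "\<And>m n. m \<ge> m0 \<Longrightarrow> d m n = d m0 n" by blast
  have Nmono: "N m0 \<subseteq> N m" if "m0 \<le> m" for m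
    by (rule lift_Suc_mono_le[of N, OF mono that])
  have sub: "f \<in> N m0" if "m \<ge> m0" "f \<in> N m" for m f
    using that(2)
  proof (induction "degree f" arbitrary: f rule: less_induct)
    case less
    show ?case
    proof (cases "f = 0")
      case True then show ?thesis using z by simp
    next
      case False
      define n where "n = degree f"
      define p where "p = lead_coeff f"
      have Pf: "P m n (degree p)" unfolding P_def p_def n_def using less.prems False by (intro bexI[of _ f]) auto
      then have "d m n \<le> enat (degree p)" by (rule dle)
      then obtain e where e: "d m n = enat e" by (cases "d m n") auto
      have de: "d m0 n = enat e" using m0[OF that(1), of n] e by simp
      then obtain g where g: "g \<in> N m0" "g \<noteq> 0" "degree g = n" "degree (lead_coeff g) = e"
        using dat[OF de] unfolding P_def by auto
      define c where "c = lead_coeff g"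
      have c0: "c \<noteq> 0" unfolding c_def using g(2) by simp
      define q where "q = p div c"
      define r where "r = p mod c"
      have gm: "g \<in> N m" using g(1) Nmono[OF that(1)] by (rule subsetD[rotated])
      define f' where "f' = f + - act [:q:] g"
      have f'm: "f' \<in> N m" unfolding f'_def by (rule ad[OF less.prems ng[OF aq[OF gm]]])
      have lqg: "degree (act [:q:] g) \<le> n" "coeff (act [:q:] g) n = c * q"
        using lq[of q g] g(3) unfolding c_def by auto
      have "coeff f' n = p - c * q" unfolding f'_def p_def n_def using lqg(2) n_def by simp
      moreover have "q * c + r = p" unfolding q_def r_def by (rule div_mult_mod_eq)
      ultimately have cf': "coeff f' n = r" by (metis add_diff_cancel_left' mult.commute)
      have dg': "degree f' \<le> n"
        unfolding f'_def using lqg(1) by (intro degree_add_le) (simp_all add: n_def)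
      have r0: "r = 0"
      proof (rule ccontr)
        assume "r \<noteq> 0"
        then have "degree r < degree c" unfolding r_def by (rule degree_mod_less'[OF c0])
        have "coeff f' n \<noteq> 0" using cf' \<open>r \<noteq> 0\<close> by simp
        then have df': "degree f' = n" using dg' by (metis le_antisym le_degree)
        then have "f' \<noteq> 0" using \<open>coeff f' n \<noteq> 0\<close> by auto
        then have "P m n (degree r)" unfolding P_def using f'm df' cf' by (intro bexI[of _ f']) auto
        then have "d m n \<le> enat (degree r)" by (rule dle)
        then have "e \<le> degree r" using e by simp
        then show False using \<open>degree r < degree c\<close> g c_def by simp
      qed
      have f'0: "f' \<in> N m0"
      proof (cases "f' = 0")
        case True then show ?thesis using z by simp
      next
        case False
        have "degree f' \<noteq> n" using cf' r0 False dg' by (metis leading_coeff_0_iff)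
        then have "degree f' < degree f" using dg' n_def by simp
        then show ?thesis using less.hyps f'm by blast
      qed
      have "act [:q:] g \<in> N m0" using g by (intro aq)
      then have "f' + act [:q:] g \<in> N m0" using f'0 by (intro ad)
      then show ?thesis unfolding f'_def by simp
    qed
  qed
  have "\<forall>m\<ge>m0. N m = N m0"
    using sub Nmono by blast
  then show ?thesis by blast
qed



lemma not_free_generic:
  fixes act tw sc :: "'a::field poly poly \<Rightarrow> 'a poly poly \<Rightarrow> 'a poly poly" and S B :: "'a poly poly set"
  assumes span: "\<And>m. \<exists>F c. finite F \<and> F \<subseteq> B \<and> (\<forall>b\<in>F. c b \<in> S) \<and> m = (\<Sum>b\<in>F. act b (c b))"
    and indep: "\<And>F c. finite F \<Longrightarrow> F \<subseteq> B \<Longrightarrow> (\<forall>b\<in>F. c b \<in> S) \<Longrightarrow> (\<Sum>b\<in>F. act b (c b)) = 0 \<Longrightarrow> \<forall>b\<in>F. c b = 0"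
    and S0: "0 \<in> S" and S1: "1 \<in> S" and Sdiff: "\<And>a b. a \<in> S \<Longrightarrow> b \<in> S \<Longrightarrow> a - b \<in> S"
    and act0: "\<And>b. act b 0 = 0" and act0': "\<And>c. act 0 c = 0"
    and actdiff: "\<And>b c d. act b (c - d) = act b c - act b d"
    and mk: "\<And>b. b \<noteq> 0 \<Longrightarrow> \<exists>q\<in>S. q \<noteq> 0 \<and> act b q \<in> S"
    and actz: "\<And>b c. act b c = 0 \<Longrightarrow> b = 0 \<or> c = 0"
    and tw: "\<And>F c t. tw (\<Sum>b\<in>F. act b (c b)) t = (\<Sum>b\<in>F. act b (sc t (c b)))"
    and tw1: "\<And>t. tw 1 t = t"
    and scS: "\<And>t c. t \<in> S \<Longrightarrow> c \<in> S \<Longrightarrow> sc t c \<in> S"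
    and sc0: "\<And>t. sc t 0 = 0" and scz: "\<And>t c. sc t c = 0 \<Longrightarrow> t = 0 \<or> c = 0"
    and onedec: "\<And>b c. 1 = act b c \<Longrightarrow> b \<in> S"
    and actS: "\<And>b d. b \<in> S \<Longrightarrow> d \<in> S \<Longrightarrow> act b d \<in> S"
    and notall: "y \<notin> S"
  shows False
proof -
  have uniq: "\<forall>b\<in>F\<union>G. (if b\<in>F then c b else 0) = (if b\<in>G then d b else 0)"
    if F: "finite F" "F \<subseteq> B" "\<forall>b\<in>F. c b \<in> S" and G: "finite G" "G \<subseteq> B" "\<forall>b\<in>G. d b \<in> S"
      and eq: "(\<Sum>b\<in>F. act b (c b)) = (\<Sum>b\<in>G. act b (d b))" for F G c d
  proof -
    define c' where "c' b = (if b\<in>F then c b else 0)" for b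
    define d' where "d' b = (if b\<in>G then d b else 0)" for b
    define e where "e b = c' b - d' b" for b
    have fU: "finite (F \<union> G)" using F G by simp
    have sc: "(\<Sum>b\<in>F\<union>G. act b (c' b)) = (\<Sum>b\<in>F. act b (c b))"
      by (rule sum.mono_neutral_cong_right[OF fU]) (auto simp: c'_def act0)
    have sd: "(\<Sum>b\<in>F\<union>G. act b (d' b)) = (\<Sum>b\<in>G. act b (d b))"
      by (rule sum.mono_neutral_cong_right[OF fU]) (auto simp: d'_def act0)
    have "(\<Sum>b\<in>F\<union>G. act b (e b)) = (\<Sum>b\<in>F\<union>G. act b (c' b)) - (\<Sum>b\<in>F\<union>G. act b (d' b))"
      by (simp add: e_def actdiff sum_subtractf)
    also have "\<dots> = 0" using sc sd eq by simp
    finally have z: "(\<Sum>b\<in>F\<union>G. act b (e b)) = 0" .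
    have eS: "\<forall>b\<in>F\<union>G. e b \<in> S"
      using F(3) G(3) S0 Sdiff by (auto simp: e_def c'_def d'_def)
    have "\<forall>b\<in>F\<union>G. e b = 0" using indep[OF fU _ eS z] F(2) G(2) by blast
    then show ?thesis by (auto simp: e_def c'_def d'_def)
  qed
  obtain F0 c0 where F0: "finite F0" "F0 \<subseteq> B" "\<forall>b\<in>F0. c0 b \<in> S" and one: "1 = (\<Sum>b\<in>F0. act b (c0 b))"
    using span[of 1] by blast
  have B0: "0 \<notin> B"
  proof
    assume "0 \<in> B"
    have "\<forall>b\<in>{0}. (\<lambda>_. 1) b = (0::'a poly poly)"
      using indep[of "{0}" "\<lambda>_. 1"] \<open>0 \<in> B\<close> by (simp add: act0' S1)
    then show False by simp
  qed
  have key: "b1 \<in> F0 \<and> c0 b1 \<noteq> 0 \<and> (\<forall>b\<in>F0. b \<noteq> b1 \<longrightarrow> c0 b = 0)" if b1: "b1 \<in> B" for b1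
  proof -
    have "b1 \<noteq> 0" using B0 b1 by auto
    then obtain q where q: "q \<in> S" "q \<noteq> 0" "act b1 q \<in> S" using mk by blast
    define t where "t = act b1 q"
    have t0: "t \<noteq> 0" unfolding t_def using actz q(2) \<open>b1 \<noteq> 0\<close> by blast
    have tS: "t \<in> S" using q t_def by simp
    have "t = tw 1 t" by (simp add: tw1)
    also have "\<dots> = (\<Sum>b\<in>F0. act b (sc t (c0 b)))" by (simp add: one tw)
    finally have e1: "(\<Sum>b\<in>F0. act b (sc t (c0 b))) = (\<Sum>b\<in>{b1}. act b ((\<lambda>_. q) b))"
      by (simp add: t_def)
    have u: "\<forall>b\<in>F0\<union>{b1}. (if b\<in>F0 then sc t (c0 b) else 0) = (if b\<in>{b1} then q else 0)"
      by (rule uniq[OF F0(1,2) _ _ _ _ e1]) (use F0 scS tS q b1 in auto)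
    have "b1 \<in> F0"
    proof (rule ccontr)
      assume "b1 \<notin> F0" then show False using u q(2) by auto
    qed
    moreover have "c0 b1 \<noteq> 0"
    proof
      assume "c0 b1 = 0" then show False using u q(2) \<open>b1 \<in> F0\<close> sc0 by force
    qed
    moreover have "\<forall>b\<in>F0. b \<noteq> b1 \<longrightarrow> c0 b = 0"
      using u scz t0 by fastforce
    ultimately show ?thesis by blast
  qed
  have "B \<noteq> {}"
  proof
    assume "B = {}" then have "F0 = {}" using F0 by auto
    then show False using one by simp
  qed
  then obtain b1 where b1: "b1 \<in> B" by blast
  have Bb: "B = {b1}"
  proof (rule ccontr)
    assume "B \<noteq> {b1}"
    then obtain b2 where b2: "b2 \<in> B" "b2 \<noteq> b1" using b1 by blast
    show False using key[OF b1] key[OF b2(1)] b2(2) by blast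
  qed
  have F0b: "F0 = {b1}" using key[OF b1] F0(2) Bb by blast
  have "b1 \<in> S" using one F0b by (intro onedec[of b1 "c0 b1"]) simp
  obtain G d where G: "finite G" "G \<subseteq> B" "\<forall>b\<in>G. d b \<in> S" and y: "y = (\<Sum>b\<in>G. act b (d b))"
    using span[of y] by blast
  have "y \<in> S"
  proof (cases "G = {}")
    case True then show ?thesis using y S0 by simp
  next
    case False
    then have "G = {b1}" using G(2) Bb by blast
    then show ?thesis using y actS[OF \<open>b1 \<in> S\<close>] G(3) by simp
  qed
  then show False using notall by simp
qed



lemma funpow_pderiv_0[simp]: "(pderiv^^k) 0 = 0"
  by (induction k) auto

lemma deg0_const: "degree (b::'a::zero poly) = 0 \<Longrightarrow> b = [:coeff b 0:]"
  by (metis coeff_pCons_0 degree_eq_zeroE)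

lemma right_hpow:
  assumes "degree b \<le> N"
  shows "dshift h 0 (weyl_mult b [:h^N:])"
  unfolding dshift_def
proof
  fix n
  show "h ^ (n - 0) dvd coeff (weyl_mult b [:h^N:]) n"
    unfolding coeff_weyl_mult
  proof (intro dvd_sum)
    fix i j k assume ijk: "i \<in> {..degree b}" "j \<in> {..degree [:h^N:]}" "k \<in> {..i}"
    show "h ^ (n - 0) dvd (if i + j - k = n then of_nat (i choose k) * coeff b i * (pderiv ^^ k) (coeff [:h^N:] j) else 0)"
    proof (cases "i + j - k = n \<and> j = 0")
      case True
      have "h^(N - k) dvd (pderiv ^^ k) (h^N)" by (rule pderiv_pow_dvd) simp
      moreover have "n \<le> N - k" using True ijk assms by auto
      ultimately have "h ^ n dvd (pderiv ^^ k) (h^N)" using le_imp_power_dvd dvd_trans by blast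
      then show ?thesis using True by (simp add: dvd_mult)
    next
      case False
      then show ?thesis by (cases "j = 0") (auto simp: coeff_pCons split: nat.split)
    qed
  qed
qed

lemma dshift_all: "degree h = 0 \<Longrightarrow> h \<noteq> 0 \<Longrightarrow> dshift h a f"
  unfolding dshift_def
  by (metis is_unit_iff_degree is_unit_power_iff unit_imp_dvd)

lemma ws_all: "degree h = 0 \<Longrightarrow> h \<noteq> 0 \<Longrightarrow> f \<in> weyl_sub h"
  using dshift_in_ws dshift_all by blast

lemma y_notin: "degree h > 0 \<Longrightarrow> weyl_y \<notin> weyl_sub h"
proof
  assume "degree h > 0" "weyl_y \<in> weyl_sub h"
  then have "\<forall>j. h^(j - 0) dvd coeff weyl_y j" using weyl_sub_dshift unfolding dshift_def by blast
  then have "h^1 dvd coeff weyl_y 1" by (metis diff_zero)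
  then have "h dvd 1" by (simp add: weyl_y_def)
  then show False using \<open>degree h > 0\<close> by (metis is_unit_iff_degree not_gr0 one_neq_zero dvd_0_left)
qed

lemma free_right_const:
  assumes h: "degree h = 0" "h \<noteq> 0"
  shows "free_right h"
  unfolding free_right_def weyl_mult_Lop
proof (rule exI[of _ "{1}"], intro conjI allI impI)
  fix m
  show "\<exists>F c. finite F \<and> F \<subseteq> {1} \<and> (\<forall>b\<in>F. c b \<in> weyl_sub h) \<and> m = (\<Sum>b\<in>F. Lop b (c b))"
    by (rule exI[of _ "{1}"], rule exI[of _ "\<lambda>_. m"]) (simp add: ws_all h)
next
  fix F c
  assume "finite F \<and> F \<subseteq> {1::'a poly poly} \<and> (\<forall>b\<in>F. c b \<in> weyl_sub h) \<and> (\<Sum>b\<in>F. Lop b (c b)) = 0"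
  then show "\<forall>b\<in>F. c b = 0"
    by (cases "F = {}") (auto dest!: subset_singletonD)
qed

lemma free_left_const:
  assumes h: "degree h = 0" "h \<noteq> 0"
  shows "free_left h"
  unfolding free_left_def weyl_mult_Lop
proof (rule exI[of _ "{1}"], intro conjI allI impI)
  fix m
  show "\<exists>F c. finite F \<and> F \<subseteq> {1} \<and> (\<forall>b\<in>F. c b \<in> weyl_sub h) \<and> m = (\<Sum>b\<in>F. Lop (c b) b)"
    by (rule exI[of _ "{1}"], rule exI[of _ "\<lambda>_. m"]) (simp add: ws_all h)
next
  fix F c
  assume "finite F \<and> F \<subseteq> {1::'a poly poly} \<and> (\<forall>b\<in>F. c b \<in> weyl_sub h) \<and> (\<Sum>b\<in>F. Lop (c b) b) = 0"
  then show "\<forall>b\<in>F. c b = 0"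
    by (cases "F = {}") (auto dest!: subset_singletonD)
qed

lemma degree_weyl_y[simp]: "degree (weyl_y :: 'a::field poly poly) = 1" "coeff (weyl_y :: 'a::field poly poly) (Suc 0) = 1"
  by (auto simp: weyl_y_def)

lemma noeth_right_const: "degree h = 0 \<Longrightarrow> h \<noteq> 0 \<Longrightarrow> noetherian_right h"
  unfolding noetherian_right_def
proof (intro allI impI)
  fix N :: "nat \<Rightarrow> 'a poly poly set"
  assume h: "degree h = 0" "h \<noteq> 0" and N: "(\<forall>n. right_submodule h (N n)) \<and> (\<forall>n. N n \<subseteq> N (Suc n))"
  have W: "\<And>s. s \<in> weyl_sub h" using ws_all h by blast
  have R: "\<And>n m s. m \<in> N n \<Longrightarrow> Lop m s \<in> N n"
    using N W unfolding right_submodule_def weyl_mult_Lop by blast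
  show "\<exists>n0. \<forall>n\<ge>n0. N n = N n0"
  proof (rule acc_generic[where act = "\<lambda>s f. Lop f s"])
    show "0 \<in> N n" for n using N unfolding right_submodule_def by blast
    show "a + b \<in> N n" if "a \<in> N n" "b \<in> N n" for n a b using N that unfolding right_submodule_def by blast
    show "- a \<in> N n" if "a \<in> N n" for n a using R[OF that, of "-1"] by (simp add: Lop_minus_right)
    show "Lop f [:q:] \<in> N n" if "f \<in> N n" for n f q using R[OF that] .
    show "Lop f weyl_y \<in> N n" if "f \<in> N n" for n f using R[OF that] .
    show "N n \<subseteq> N (Suc n)" for n using N by blast
    show "degree (Lop f [:q:]) \<le> degree f \<and> coeff (Lop f [:q:]) (degree f) = lead_coeff f * q" for f q
      using degree_Lop_le[of f "[:q:]"] coeff_Lop_top[of f "[:q:]"] by simp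
    show "degree (Lop f weyl_y) \<le> Suc (degree f) \<and> coeff (Lop f weyl_y) (Suc (degree f)) = lead_coeff f" for f
      using degree_Lop_le[of f weyl_y] coeff_Lop_top[of f weyl_y] by (simp add: degree_weyl_y)
  qed
qed

lemma noeth_left_const: "degree h = 0 \<Longrightarrow> h \<noteq> 0 \<Longrightarrow> noetherian_left h"
  unfolding noetherian_left_def
proof (intro allI impI)
  fix N :: "nat \<Rightarrow> 'a poly poly set"
  assume h: "degree h = 0" "h \<noteq> 0" and N: "(\<forall>n. left_submodule h (N n)) \<and> (\<forall>n. N n \<subseteq> N (Suc n))"
  have W: "\<And>s. s \<in> weyl_sub h" using ws_all h by blast
  have R: "\<And>n m s. m \<in> N n \<Longrightarrow> Lop s m \<in> N n"
    using N W unfolding left_submodule_def weyl_mult_Lop by blast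
  show "\<exists>n0. \<forall>n\<ge>n0. N n = N n0"
  proof (rule acc_generic[where act = "\<lambda>s f. Lop s f"])
    show "0 \<in> N n" for n using N unfolding left_submodule_def by blast
    show "a + b \<in> N n" if "a \<in> N n" "b \<in> N n" for n a b using N that unfolding left_submodule_def by blast
    show "- a \<in> N n" if "a \<in> N n" for n a using R[OF that, of "-1"] by (simp add: Lop_minus_left)
    show "Lop [:q:] f \<in> N n" if "f \<in> N n" for n f q using R[OF that] .
    show "Lop weyl_y f \<in> N n" if "f \<in> N n" for n f using R[OF that] .
    show "N n \<subseteq> N (Suc n)" for n using N by blast
    show "degree (Lop [:q:] f) \<le> degree f \<and> coeff (Lop [:q:] f) (degree f) = lead_coeff f * q" for f q
      using degree_Lop_le[of "[:q:]" f] coeff_Lop_top[of "[:q:]" f] by (simp add: mult.commute)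
    show "degree (Lop weyl_y f) \<le> Suc (degree f) \<and> coeff (Lop weyl_y f) (Suc (degree f)) = lead_coeff f" for f
      using degree_Lop_le[of weyl_y f] coeff_Lop_top[of weyl_y f] by (simp add: degree_weyl_y)
  qed
qed

lemma dshift_sub_mono: "dshift h m f \<Longrightarrow> dshift h (Suc m) f"
  unfolding dshift_def
proof
  fix j assume "\<forall>j. h ^ (j - m) dvd coeff f j"
  moreover have "h ^ (j - Suc m) dvd h ^ (j - m)" by (rule le_imp_power_dvd) simp
  ultimately show "h ^ (j - Suc m) dvd coeff f j" using dvd_trans by blast
qed

lemma monom_dshift: "dshift h (Suc n0) (monom 1 (Suc n0))"
  unfolding dshift_def by (simp add: coeff_monom)

lemma monom_not_dshift:
  assumes "degree h > 0" shows "\<not> dshift h n0 (monom 1 (Suc n0))"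
proof
  assume "dshift h n0 (monom 1 (Suc n0))"
  then have "h ^ (Suc n0 - n0) dvd coeff (monom 1 (Suc n0)) (Suc n0)" unfolding dshift_def by blast
  then have "h dvd 1" by simp
  then show False using assms by (metis is_unit_iff_degree not_gr0 one_neq_zero dvd_0_left)
qed

lemma not_noeth_right: "degree h > 0 \<Longrightarrow> \<not> noetherian_right h"
  unfolding noetherian_right_def
proof
  assume h: "degree h > 0" and A: "\<forall>N. (\<forall>n. right_submodule h (N n)) \<and> (\<forall>n. N n \<subseteq> N (Suc n)) \<longrightarrow> (\<exists>n0. \<forall>n\<ge>n0. N n = N n0)"
  define T where "T m = {f. dshift h m f}" for m
  have "(\<forall>n. right_submodule h (T n)) \<and> (\<forall>n. T n \<subseteq> T (Suc n))"
  proof (intro conjI allI)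
    fix n
    show "right_submodule h (T n)"
      unfolding right_submodule_def T_def
    proof (intro conjI ballI)
      show "0 \<in> {f. dshift h n f}" by (simp add: dshift_def)
      show "a + b \<in> {f. dshift h n f}" if "a \<in> {f. dshift h n f}" "b \<in> {f. dshift h n f}" for a b
        using that by (simp add: dshift_def dvd_add)
      show "weyl_mult m s \<in> {f. dshift h n f}" if "m \<in> {f. dshift h n f}" "s \<in> weyl_sub h" for m s
      proof -
        have "dshift h n m" using that(1) by simp
        then have "dshift h (n + 0) (weyl_mult m s)" by (rule dshift_mult[OF _ weyl_sub_dshift[OF that(2)]])
        then show ?thesis by simp
      qed
    qed
    show "T n \<subseteq> T (Suc n)" unfolding T_def using dshift_sub_mono by blast
  qed
  then have "\<exists>n0. \<forall>n\<ge>n0. T n = T n0" by (rule mp[OF spec[OF A, of T]])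
  then obtain n0 where n0: "\<forall>n\<ge>n0. T n = T n0" by blast
  have "T (Suc n0) = T n0" by (rule n0[rule_format]) simp
  moreover have "monom 1 (Suc n0) \<in> T (Suc n0)" using monom_dshift[of h n0] unfolding T_def by simp
  moreover have "monom 1 (Suc n0) \<notin> T n0" using monom_not_dshift[OF h, of n0] unfolding T_def by simp
  ultimately show False by simp
qed

lemma not_noeth_left: "degree h > 0 \<Longrightarrow> \<not> noetherian_left h"
  unfolding noetherian_left_def
proof
  assume h: "degree h > 0" and A: "\<forall>N. (\<forall>n. left_submodule h (N n)) \<and> (\<forall>n. N n \<subseteq> N (Suc n)) \<longrightarrow> (\<exists>n0. \<forall>n\<ge>n0. N n = N n0)"
  define T where "T m = {f. dshift h m f}" for m
  have "(\<forall>n. left_submodule h (T n)) \<and> (\<forall>n. T n \<subseteq> T (Suc n))"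
  proof (intro conjI allI)
    fix n
    show "left_submodule h (T n)"
      unfolding left_submodule_def T_def
    proof (intro conjI ballI)
      show "0 \<in> {f. dshift h n f}" by (simp add: dshift_def)
      show "a + b \<in> {f. dshift h n f}" if "a \<in> {f. dshift h n f}" "b \<in> {f. dshift h n f}" for a b
        using that by (simp add: dshift_def dvd_add)
      show "weyl_mult s m \<in> {f. dshift h n f}" if "m \<in> {f. dshift h n f}" "s \<in> weyl_sub h" for m s
      proof -
        have "dshift h n m" using that(1) by simp
        then have "dshift h (0 + n) (weyl_mult s m)" by (rule dshift_mult[OF weyl_sub_dshift[OF that(2)]])
        then show ?thesis by simp
      qed
    qed
    show "T n \<subseteq> T (Suc n)" unfolding T_def using dshift_sub_mono by blast
  qed
  then have "\<exists>n0. \<forall>n\<ge>n0. T n = T n0" by (rule mp[OF spec[OF A, of T]])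
  then obtain n0 where n0: "\<forall>n\<ge>n0. T n = T n0" by blast
  have "T (Suc n0) = T n0" by (rule n0[rule_format]) simp
  moreover have "monom 1 (Suc n0) \<in> T (Suc n0)" using monom_dshift[of h n0] unfolding T_def by simp
  moreover have "monom 1 (Suc n0) \<notin> T n0" using monom_not_dshift[OF h, of n0] unfolding T_def by simp
  ultimately show False by simp
qed

lemma one_dec_deg: "1 = Lop b c \<Longrightarrow> degree b = 0 \<and> degree c = 0"
proof -
  assume e: "1 = Lop b c"
  then have "b \<noteq> 0" "c \<noteq> 0" by auto
  then have "degree (Lop b c) = degree b + degree c" by (rule degree_Lop)
  then show ?thesis using e[symmetric] by simp
qed

lemma not_free_right: assumes h: "degree h > 0" shows "\<not> free_right h"
proof
  assume "free_right h"
  then obtain B where span: "\<forall>m. \<exists>F c. finite F \<and> F \<subseteq> B \<and> (\<forall>b\<in>F. c b \<in> weyl_sub h) \<and> m = (\<Sum>b\<in>F. Lop b (c b))"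
    and indep: "\<forall>F c. finite F \<and> F \<subseteq> B \<and> (\<forall>b\<in>F. c b \<in> weyl_sub h) \<and> (\<Sum>b\<in>F. Lop b (c b)) = 0 \<longrightarrow> (\<forall>b\<in>F. c b = 0)"
    unfolding free_right_def weyl_mult_Lop by blast
  have h0: "h \<noteq> 0" using h by auto
  show False
  proof (rule not_free_generic[where act = "\<lambda>b c. Lop b c" and tw = "\<lambda>m t. Lop m t" and sc = "\<lambda>t c. Lop c t"
      and S = "weyl_sub h" and B = B and y = weyl_y])
    show "\<exists>F c. finite F \<and> F \<subseteq> B \<and> (\<forall>b\<in>F. c b \<in> weyl_sub h) \<and> m = (\<Sum>b\<in>F. Lop b (c b))" for m
      using span by blast
    show "\<forall>b\<in>F. c b = 0" if "finite F" "F \<subseteq> B" "\<forall>b\<in>F. c b \<in> weyl_sub h" "(\<Sum>b\<in>F. Lop b (c b)) = 0" for F c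
      using indep that by blast
    show "0 \<in> weyl_sub h" by (rule ws_zero)
    show "1 \<in> weyl_sub h" by (rule weyl_sub.one)
    show "a - b \<in> weyl_sub h" if "a \<in> weyl_sub h" "b \<in> weyl_sub h" for a b using that by (rule ws_diff)
    show "Lop b 0 = 0" for b by simp
    show "Lop 0 c = 0" for c by simp
    show "Lop b (c - d) = Lop b c - Lop b d" for b c d by (rule Lop_diff_right)
    show "\<exists>q\<in>weyl_sub h. q \<noteq> 0 \<and> Lop b q \<in> weyl_sub h" if "b \<noteq> 0" for b
    proof (intro bexI conjI)
      show "[:h ^ degree b:] \<in> weyl_sub h" by (rule ws_const)
      show "[:h ^ degree b:] \<noteq> 0" using h0 by simp
      show "Lop b [:h ^ degree b:] \<in> weyl_sub h"
        using dshift_in_ws[OF h0 right_hpow[of b "degree b" h]] by (simp add: weyl_mult_Lop)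
    qed
    show "b = 0 \<or> c = 0" if "Lop b c = 0" for b c using that by (simp add: Lop_eq_0)
    show "Lop (\<Sum>b\<in>F. Lop b (c b)) t = (\<Sum>b\<in>F. Lop b (Lop (c b) t))" for F c t
      by (simp add: Lop_sum_left Lop_assoc)
    show "Lop 1 t = t" for t by simp
    show "Lop c t \<in> weyl_sub h" if "t \<in> weyl_sub h" "c \<in> weyl_sub h" for t c
      using weyl_sub.mult[OF that(2,1)] by (simp add: weyl_mult_Lop)
    show "Lop 0 t = 0" for t by simp
    show "t = 0 \<or> c = 0" if "Lop c t = 0" for t c using that by (auto simp: Lop_eq_0)
    show "b \<in> weyl_sub h" if "1 = Lop b c" for b c
      using one_dec_deg[OF that] deg0_const[of b] ws_const[of "coeff b 0" h] by simp
    show "Lop b d \<in> weyl_sub h" if "b \<in> weyl_sub h" "d \<in> weyl_sub h" for b d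
      using weyl_sub.mult[OF that] by (simp add: weyl_mult_Lop)
    show "weyl_y \<notin> weyl_sub h" by (rule y_notin[OF h])
  qed
qed

lemma not_free_left: assumes h: "degree h > 0" shows "\<not> free_left h"
proof
  assume "free_left h"
  then obtain B where span: "\<forall>m. \<exists>F c. finite F \<and> F \<subseteq> B \<and> (\<forall>b\<in>F. c b \<in> weyl_sub h) \<and> m = (\<Sum>b\<in>F. Lop (c b) b)"
    and indep: "\<forall>F c. finite F \<and> F \<subseteq> B \<and> (\<forall>b\<in>F. c b \<in> weyl_sub h) \<and> (\<Sum>b\<in>F. Lop (c b) b) = 0 \<longrightarrow> (\<forall>b\<in>F. c b = 0)"
    unfolding free_left_def weyl_mult_Lop by blast
  have h0: "h \<noteq> 0" using h by auto
  show False
  proof (rule not_free_generic[where act = "\<lambda>b c. Lop c b" and tw = "\<lambda>m t. Lop t m" and sc = "\<lambda>t c. Lop t c"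
      and S = "weyl_sub h" and B = B and y = weyl_y])
    show "\<exists>F c. finite F \<and> F \<subseteq> B \<and> (\<forall>b\<in>F. c b \<in> weyl_sub h) \<and> m = (\<Sum>b\<in>F. Lop (c b) b)" for m
      using span by blast
    show "\<forall>b\<in>F. c b = 0" if "finite F" "F \<subseteq> B" "\<forall>b\<in>F. c b \<in> weyl_sub h" "(\<Sum>b\<in>F. Lop (c b) b) = 0" for F c
      using indep that by blast
    show "0 \<in> weyl_sub h" by (rule ws_zero)
    show "1 \<in> weyl_sub h" by (rule weyl_sub.one)
    show "a - b \<in> weyl_sub h" if "a \<in> weyl_sub h" "b \<in> weyl_sub h" for a b using that by (rule ws_diff)
    show "Lop 0 b = 0" for b by simp
    show "Lop c 0 = 0" for c by simp
    show "Lop (c - d) b = Lop c b - Lop d b" for b c d by (rule Lop_diff_left)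
    show "\<exists>q\<in>weyl_sub h. q \<noteq> 0 \<and> Lop q b \<in> weyl_sub h" if "b \<noteq> 0" for b
    proof (intro bexI conjI)
      show "[:h ^ degree b:] \<in> weyl_sub h" by (rule ws_const)
      show "[:h ^ degree b:] \<noteq> 0" using h0 by simp
      have "dshift h 0 (smult (h ^ degree b) b)"
        unfolding dshift_def
      proof
        fix j
        show "h ^ (j - 0) dvd coeff (smult (h ^ degree b) b) j"
        proof (cases "j \<le> degree b")
          case True
          then have "h ^ j dvd h ^ degree b" by (rule le_imp_power_dvd)
          then show ?thesis by (simp add: dvd_mult2)
        next
          case False then show ?thesis by (simp add: coeff_eq_0)
        qed
      qed
      then show "Lop [:h ^ degree b:] b \<in> weyl_sub h"
        using dshift_in_ws[OF h0] by (simp add: Lop_const_left)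
    qed
    show "b = 0 \<or> c = 0" if "Lop c b = 0" for b c using that by (auto simp: Lop_eq_0)
    show "Lop t (\<Sum>b\<in>F. Lop (c b) b) = (\<Sum>b\<in>F. Lop (Lop t (c b)) b)" for F c t
      by (simp add: Lop_sum_right Lop_assoc)
    show "Lop t 1 = t" for t by simp
    show "Lop t c \<in> weyl_sub h" if "t \<in> weyl_sub h" "c \<in> weyl_sub h" for t c
      using weyl_sub.mult[OF that] by (simp add: weyl_mult_Lop)
    show "Lop t 0 = 0" for t by simp
    show "t = 0 \<or> c = 0" if "Lop t c = 0" for t c using that by (auto simp: Lop_eq_0)
    show "b \<in> weyl_sub h" if "1 = Lop c b" for b c
      using one_dec_deg[OF that] deg0_const[of b] ws_const[of "coeff b 0" h] by simp
    show "Lop d b \<in> weyl_sub h" if "b \<in> weyl_sub h" "d \<in> weyl_sub h" for b d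
      using weyl_sub.mult[OF that(2,1)] by (simp add: weyl_mult_Lop)
    show "weyl_y \<notin> weyl_sub h" by (rule y_notin[OF h])
  qed
qed

theorem corollary4p5:
  fixes h :: "'a::field poly"
  assumes "h \<noteq> 0"
  shows "((\<exists>c. c \<noteq> 0 \<and> h = [:c:]) \<longleftrightarrow> noetherian_right h)
       \<and> ((\<exists>c. c \<noteq> 0 \<and> h = [:c:]) \<longleftrightarrow> free_right h)
       \<and> ((\<exists>c. c \<noteq> 0 \<and> h = [:c:]) \<longleftrightarrow> noetherian_left h)
       \<and> ((\<exists>c. c \<noteq> 0 \<and> h = [:c:]) \<longleftrightarrow> free_left h)"
proof -
  have C: "(\<exists>c. c \<noteq> 0 \<and> h = [:c:]) \<longleftrightarrow> degree h = 0"
  proof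
    assume "\<exists>c. c \<noteq> 0 \<and> h = [:c:]" then show "degree h = 0" by auto
  next
    assume "degree h = 0"
    then have "h = [:coeff h 0:]" by (rule deg0_const)
    then show "\<exists>c. c \<noteq> 0 \<and> h = [:c:]" using assms by (intro exI[of _ "coeff h 0"]) auto
  qed
  show ?thesis
  proof (cases "degree h = 0")
    case True
    then show ?thesis using C assms noeth_right_const noeth_left_const free_right_const free_left_const by blast
  next
    case False
    then have "degree h > 0" by simp
    then show ?thesis using C not_noeth_right not_noeth_left not_free_right not_free_left False by blast
  qed
qed


end
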